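(* Let $X$ be a compact Hausdorff space and let $L$ be a normal, distributive and disjunctive lattice. If $X$ has a base $\mathcal B$ for its closed sets that is a sublattice of the lattice of closed subsets of $X$ (containing $\emptyset$ and $X$) and there is a lattice embedding of $\mathcal B$ into $L$, then the Wallman space $wL$ admits a continuous surjection onto $X$.
   Context: Lattices have a least element $\mathbf 0$ and a greatest element $\mathbf 1$, and lattice embeddings are injective maps preserving $\wedge,\vee,\mathbf 0,\mathbf 1$ (for $\mathcal B$: $\cap,\cup,\emptyset,X$). $L$ is disjunctive if whenever $a\not\le b$ there is $c\in L$ with $c\le a$ and $c\wedge b=\mathbf 0$. $L$ is normal if for all $x,y$ with $x\wedge y=\mathbf 0$ there are $u,v$ with $x\wedge u=\mathbf 0$, $y\wedge v=\mathbf 0$ and $u\vee v=\mathbf 1$. The Wallman space $wL$ is the set of ultrafilters (maximal proper filters) of $L$, topologized by taking the sets $\{p\in wL: a\in p\}$, $a\in L$, as a base for the closed sets; it is a compact $T_1$-space, and it is Hausdorff when $L$ is normal. *)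

theory Defs
  imports "HOL-Analysis.Analysis"
begin

definition disjunctive_lattice :: "'l::bounded_lattice itself \<Rightarrow> bool" where
  "disjunctive_lattice _ \<longleftrightarrow>
     (\<forall>a b::'l. \<not> a \<le> b \<longrightarrow> (\<exists>c. c \<le> a \<and> inf c b = bot))"

definition normal_lattice :: "'l::bounded_lattice itself \<Rightarrow> bool" where
  "normal_lattice _ \<longleftrightarrow>
     (\<forall>x y::'l. inf x y = bot \<longrightarrow>
        (\<exists>u v. inf x u = bot \<and> inf y v = bot \<and> sup u v = top))"

definition lattice_filter :: "'l::bounded_lattice set \<Rightarrow> bool" where
  "lattice_filter F \<longleftrightarrow> top \<in> F \<and> bot \<notin> F \<and>
     (\<forall>a\<in>F. \<forall>b\<in>F. inf a b \<in> F) \<and>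
     (\<forall>a\<in>F. \<forall>b. a \<le> b \<longrightarrow> b \<in> F)"

definition lattice_ultrafilter :: "'l::bounded_lattice set \<Rightarrow> bool" where
  "lattice_ultrafilter F \<longleftrightarrow> lattice_filter F \<and>
     (\<forall>G. lattice_filter G \<and> F \<subseteq> G \<longrightarrow> G = F)"

definition wallman_points :: "'l::bounded_lattice itself \<Rightarrow> 'l set set" where
  "wallman_points _ = {p. lattice_ultrafilter p}"

definition wallman_basic :: "'l::bounded_lattice \<Rightarrow> 'l set set" where
  "wallman_basic a = {p. lattice_ultrafilter p \<and> a \<in> p}"

definition wallman_space :: "'l::bounded_lattice itself \<Rightarrow> 'l set topology" where
  "wallman_space T = topology_generated_by
     {wallman_points T - wallman_basic a | a. True}"

definition closed_base_sublattice :: "'a topology \<Rightarrow> 'a set set \<Rightarrow> bool" where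
  "closed_base_sublattice X B \<longleftrightarrow>
     (\<forall>b\<in>B. closedin X b) \<and>
     (\<forall>C. closedin X C \<longrightarrow> (\<exists>\<A>\<subseteq>B. C = topspace X \<inter> \<Inter>\<A>)) \<and>
     {} \<in> B \<and> topspace X \<in> B \<and>
     (\<forall>a\<in>B. \<forall>b\<in>B. a \<inter> b \<in> B \<and> a \<union> b \<in> B)"

definition lattice_embedding_on ::
    "'a set set \<Rightarrow> 'a set \<Rightarrow> ('a set \<Rightarrow> 'l::bounded_lattice) \<Rightarrow> bool" where
  "lattice_embedding_on B S f \<longleftrightarrow> inj_on f B \<and>
     f {} = bot \<and> f S = top \<and>
     (\<forall>a\<in>B. \<forall>b\<in>B. f (a \<inter> b) = inf (f a) (f b) \<and> f (a \<union> b) = sup (f a) (f b))"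

end

theory Submission
  imports Defs
begin

lemma G_filter:
  fixes p :: "'l::{bounded_lattice, distrib_lattice} set"
  assumes pf: "lattice_filter p" and nd: "\<not> (\<exists>d\<in>p. inf a d = bot)"
  shows "lattice_filter {c. \<exists>d\<in>p. inf a d \<le> c}" (is "lattice_filter ?G")
    unfolding lattice_filter_def
  proof (intro conjI ballI allI impI)
    show "top \<in> ?G" using pf unfolding lattice_filter_def by auto
    show "bot \<notin> ?G" using nd using bot_unique by blast
  next
    fix x y assume "x \<in> ?G" "y \<in> ?G"
    then obtain d1 d2 where d: "d1 \<in> p" "d2 \<in> p" "inf a d1 \<le> x" "inf a d2 \<le> y"
      by auto
    have "inf d1 d2 \<in> p" using pf d(1,2) unfolding lattice_filter_def by blast
    moreover have "inf a (inf d1 d2) \<le> inf x y"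
    proof (rule le_infI)
      show "inf a (inf d1 d2) \<le> x" using inf_mono[OF order_refl inf_le1, of a d1 d2] d(3) by (rule order_trans)
      show "inf a (inf d1 d2) \<le> y" using inf_mono[OF order_refl inf_le2, of a d1 d2] d(4) by (rule order_trans)
    qed
    ultimately show "inf x y \<in> ?G" by auto
  next
    fix x y assume "x \<in> ?G" "x \<le> y" then show "y \<in> ?G"
      using order_trans by blast
  qed

lemma uf_avoid:
  fixes p :: "'l::{bounded_lattice, distrib_lattice} set"
  assumes "lattice_ultrafilter p" "a \<notin> p"
  shows "\<exists>d\<in>p. inf a d = bot"
proof (rule ccontr)
  assume nd: "\<not> (\<exists>d\<in>p. inf a d = bot)"
  have pf: "lattice_filter p" using assms(1) by (simp add: lattice_ultrafilter_def)
  define G where "G = {c. \<exists>d\<in>p. inf a d \<le> c}"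
  have "lattice_filter G" unfolding G_def by (rule G_filter[OF pf nd])
  moreover have "p \<subseteq> G" unfolding G_def using inf_le2 by blast
  ultimately have "G = p" using assms(1) by (simp add: lattice_ultrafilter_def)
  moreover have "a \<in> G" unfolding G_def using pf unfolding lattice_filter_def by auto
  ultimately show False using assms(2) by simp
qed

lemma uf_prime:
  fixes p :: "'l::{bounded_lattice, distrib_lattice} set"
  assumes "lattice_ultrafilter p" "sup a b \<in> p"
  shows "a \<in> p \<or> b \<in> p"
proof (rule ccontr)
  assume "\<not> (a \<in> p \<or> b \<in> p)"
  then obtain d1 d2 where d: "d1 \<in> p" "d2 \<in> p" "inf a d1 = bot" "inf b d2 = bot"
    using uf_avoid[OF assms(1)] by meson
  have pf: "lattice_filter p" using assms(1) by (simp add: lattice_ultrafilter_def)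
  have "inf d1 d2 \<in> p" using pf d(1,2) unfolding lattice_filter_def by blast
  then have "inf (sup a b) (inf d1 d2) \<in> p" using pf assms(2) unfolding lattice_filter_def by blast
  moreover have "inf (sup a b) (inf d1 d2) = bot"
  proof -
    have "inf (sup a b) (inf d1 d2) = sup (inf a (inf d1 d2)) (inf b (inf d1 d2))"
      by (rule inf_sup_distrib2)
    also have "inf a (inf d1 d2) = inf (inf a d1) d2" by (rule inf.assoc[symmetric])
    also have "\<dots> = bot" using d(3) by simp
    also have "inf b (inf d1 d2) = inf d1 (inf b d2)" by (rule inf.left_commute)
    also have "\<dots> = bot" using d(4) by simp
    finally show ?thesis by simp
  qed
  ultimately show False using pf unfolding lattice_filter_def by auto
qed

lemma base_sep:
  assumes "closed_base_sublattice X B" "closedin X C" "x \<in> topspace X" "x \<notin> C"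
  shows "\<exists>b\<in>B. C \<subseteq> b \<and> x \<notin> b"
proof -
  obtain A where A: "A \<subseteq> B" "C = topspace X \<inter> \<Inter>A"
    using assms(1,2) unfolding closed_base_sublattice_def by blast
  then show ?thesis using assms(3,4) by blast
qed

lemma uf_exists:
  fixes F :: "'l::bounded_lattice set"
  assumes "lattice_filter F"
  shows "\<exists>p. lattice_ultrafilter p \<and> F \<subseteq> p"
proof -
  define \<A> where "\<A> = {G. lattice_filter G \<and> F \<subseteq> G}"
  have "\<exists>M\<in>\<A>. \<forall>X\<in>\<A>. M \<subseteq> X \<longrightarrow> X = M"
  proof (rule subset_Zorn_nonempty)
    show "\<A> \<noteq> {}" using assms unfolding \<A>_def by auto
  next
    fix \<C> assume ne: "\<C> \<noteq> {}" and ch: "subset.chain \<A> \<C>"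
    have sub: "\<C> \<subseteq> \<A>" and tot: "\<forall>x\<in>\<C>. \<forall>y\<in>\<C>. x \<subseteq> y \<or> y \<subseteq> x"
      using ch unfolding subset.chain_def by auto
    have filt: "\<And>G. G \<in> \<C> \<Longrightarrow> lattice_filter G" using sub unfolding \<A>_def by blast
    have "lattice_filter (\<Union>\<C>)"
      unfolding lattice_filter_def
    proof (intro conjI ballI allI impI)
      obtain G0 where "G0 \<in> \<C>" using ne by blast
      then show "top \<in> \<Union>\<C>" using filt[of G0] unfolding lattice_filter_def by blast
      show "bot \<notin> \<Union>\<C>" using filt unfolding lattice_filter_def by blast
    next
      fix a b assume "a \<in> \<Union>\<C>" "b \<in> \<Union>\<C>"
      then obtain G1 G2 where g: "G1 \<in> \<C>" "G2 \<in> \<C>" "a \<in> G1" "b \<in> G2" by auto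
      show "inf a b \<in> \<Union>\<C>"
      proof (cases "G1 \<subseteq> G2")
        case True
        then have "inf a b \<in> G2" using g filt[of G2] unfolding lattice_filter_def by blast
        then show ?thesis using g by auto
      next
        case False
        then have "G2 \<subseteq> G1" using tot g by blast
        then have "inf a b \<in> G1" using g filt[of G1] unfolding lattice_filter_def by blast
        then show ?thesis using g by auto
      qed
    next
      fix a b assume "a \<in> \<Union>\<C>" "a \<le> b"
      then obtain G1 where "G1 \<in> \<C>" "a \<in> G1" by auto
      then have "b \<in> G1" using \<open>a \<le> b\<close> filt[of G1] unfolding lattice_filter_def by blast
      then show "b \<in> \<Union>\<C>" using \<open>G1 \<in> \<C>\<close> by blast
    qed
    moreover have "F \<subseteq> \<Union>\<C>" using ne sub unfolding \<A>_def by blast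
    ultimately show "\<Union>\<C> \<in> \<A>" unfolding \<A>_def by simp
  qed
  then obtain M where M: "M \<in> \<A>" "\<forall>X\<in>\<A>. M \<subseteq> X \<longrightarrow> X = M" by blast
  have "lattice_ultrafilter M" unfolding lattice_ultrafilter_def
  proof (intro conjI allI impI)
    show "lattice_filter M" using M(1) unfolding \<A>_def by simp
    fix G assume "lattice_filter G \<and> M \<subseteq> G"
    moreover then have "G \<in> \<A>" using M(1) unfolding \<A>_def by auto
    ultimately show "G = M" using M(2) by blast
  qed
  then show ?thesis using M(1) unfolding \<A>_def by blast
qed


lemma fin_inter:
  assumes "finite F" "F \<noteq> {}" "F \<subseteq> {b\<in>B. f b \<in> p}"
    and cl: "\<forall>a\<in>B. \<forall>b\<in>B. a \<inter> b \<in> B"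
    and hom: "\<forall>a\<in>B. \<forall>b\<in>B. f (a \<inter> b) = inf (f a) (f b)"
    and pf: "lattice_filter p"
  shows "\<Inter>F \<in> B \<and> f (\<Inter>F) \<in> p"
  using assms(1,2,3)
proof (induction F rule: finite_ne_induct)
  case (singleton x)
  then show ?case by simp
next
  case (insert x F)
  then have x: "x \<in> B" "f x \<in> p" and IH: "\<Inter>F \<in> B" "f (\<Inter>F) \<in> p" by auto
  have "\<Inter>(insert x F) = x \<inter> \<Inter>F" by simp
  moreover have "x \<inter> \<Inter>F \<in> B" using cl x IH by blast
  moreover have "f (x \<inter> \<Inter>F) = inf (f x) (f (\<Inter>F))" using hom x IH by blast
  moreover have "inf (f x) (f (\<Inter>F)) \<in> p" using pf x IH unfolding lattice_filter_def by blast
  ultimately show ?case by simp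
qed

theorem lemma5p2:
  fixes X :: "'a topology" and B :: "'a set set"
    and T :: "'l::{bounded_lattice, distrib_lattice} itself"
    and f :: "'a set \<Rightarrow> 'l"
  assumes "compact_space X" and "Hausdorff_space X"
    and "normal_lattice T" and "disjunctive_lattice T"
    and "closed_base_sublattice X B"
    and "lattice_embedding_on B (topspace X) f"
  shows "\<exists>g. continuous_map (wallman_space T) X g \<and>
             g ` topspace (wallman_space T) = topspace X"
proof -
  note cb = assms(5)
  have Bcl: "\<And>b. b \<in> B \<Longrightarrow> closedin X b" using cb unfolding closed_base_sublattice_def by blast
  have Bsub: "\<And>b. b \<in> B \<Longrightarrow> b \<subseteq> topspace X" using Bcl closedin_subset by blast
  have Be: "{} \<in> B" and Bt: "topspace X \<in> B" and Bint: "\<forall>a\<in>B. \<forall>b\<in>B. a \<inter> b \<in> B"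
    and Bun: "\<And>a b. a \<in> B \<Longrightarrow> b \<in> B \<Longrightarrow> a \<union> b \<in> B"
    using cb unfolding closed_base_sublattice_def by blast+
  have inj: "inj_on f B" and fe: "f {} = bot" and ft: "f (topspace X) = top"
    and fint: "\<forall>a\<in>B. \<forall>b\<in>B. f (a \<inter> b) = inf (f a) (f b)"
    and fsup: "\<And>a b. a \<in> B \<Longrightarrow> b \<in> B \<Longrightarrow> f (a \<union> b) = sup (f a) (f b)"
    using assms(6) unfolding lattice_embedding_on_def by blast+
  have pfU: "\<And>p. lattice_ultrafilter p \<Longrightarrow> lattice_filter p"
    by (simp add: lattice_ultrafilter_def)
  have topW: "topspace (wallman_space T) = {p. lattice_ultrafilter p}"
  proof -
    have "wallman_points T - wallman_basic bot \<in> {wallman_points T - wallman_basic a | a. True}"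
      by blast
    moreover have "wallman_points T - wallman_basic bot = {p. lattice_ultrafilter p}"
      unfolding wallman_points_def wallman_basic_def lattice_ultrafilter_def lattice_filter_def by blast
    moreover have "\<Union>{wallman_points T - wallman_basic a | a. True} \<subseteq> {p. lattice_ultrafilter p}"
      unfolding wallman_points_def by blast
    ultimately show ?thesis unfolding wallman_space_def topology_generated_by_topspace by blast
  qed
  have opW: "\<And>a. openin (wallman_space T) ({p. lattice_ultrafilter p} - wallman_basic a)"
  proof -
    fix a :: 'l
    have "{p. lattice_ultrafilter p} - wallman_basic a \<in> {wallman_points T - wallman_basic a | a. True}"
      unfolding wallman_points_def by blast
    then show "openin (wallman_space T) ({p. lattice_ultrafilter p} - wallman_basic a)"
      unfolding wallman_space_def by (rule topology_generated_by_Basis)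
  qed
  define P where "P p x \<longleftrightarrow> x \<in> topspace X \<and> (\<forall>b\<in>B. f b \<in> p \<longrightarrow> x \<in> b)" for p x
  have sep2: "\<exists>b1\<in>B. \<exists>b2\<in>B. b1 \<union> b2 = topspace X \<and> S \<subseteq> b1 \<and> y \<notin> b1 \<and> z \<notin> b2"
    if h: "openin X U" "openin X V" "disjnt U V" "y \<in> V" "z \<in> U" "S \<subseteq> U" for U V y z S
  proof -
    have yX: "y \<in> topspace X" and zX: "z \<in> topspace X" using h openin_subset by blast+
    have c1: "closedin X (topspace X - V)" and c2: "closedin X (topspace X - U)" using h by blast+
    obtain b1 where "b1 \<in> B" "topspace X - V \<subseteq> b1" "y \<notin> b1"
      using base_sep[OF cb c1 yX] h(4) by blast
    moreover obtain b2 where "b2 \<in> B" "topspace X - U \<subseteq> b2" "z \<notin> b2"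
      using base_sep[OF cb c2 zX] h(5) by blast
    ultimately have b: "b1 \<in> B" "topspace X - V \<subseteq> b1" "y \<notin> b1"
      "b2 \<in> B" "topspace X - U \<subseteq> b2" "z \<notin> b2" by blast+
    have "b1 \<union> b2 = topspace X" using b Bsub h(3) unfolding disjnt_def by blast
    moreover have "S \<subseteq> b1" using b(2) h openin_subset unfolding disjnt_def by blast
    ultimately show ?thesis using b by blast
  qed
  have key: "f b1 \<in> p \<or> f b2 \<in> p" if "lattice_ultrafilter p" "b1 \<in> B" "b2 \<in> B"
      "b1 \<union> b2 = topspace X" for p b1 b2
  proof -
    have "sup (f b1) (f b2) = top" using fsup[OF that(2,3)] that(4) ft by simp
    then have "sup (f b1) (f b2) \<in> p" using pfU[OF that(1)] unfolding lattice_filter_def by simp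
    then show ?thesis using uf_prime[OF that(1)] by blast
  qed
  have ex1: "\<exists>!x. P p x" if up: "lattice_ultrafilter p" for p
  proof (rule ex_ex1I)
    have pf: "lattice_filter p" using pfU[OF up] .
    let ?U = "{b\<in>B. f b \<in> p}"
    have "(\<forall>C\<in>?U. closedin X C) \<and> (\<forall>F. finite F \<and> F \<subseteq> ?U \<longrightarrow> \<Inter>F \<noteq> {})"
      proof (intro conjI allI impI ballI)
        fix C assume "C \<in> ?U" then show "closedin X C" using Bcl by blast
      next
        fix F assume F: "finite F \<and> F \<subseteq> ?U"
        show "\<Inter>F \<noteq> {}"
        proof (cases "F = {}")
          case False
          have FF: "finite F" "F \<subseteq> ?U" using F by blast+
          have I: "\<Inter>F \<in> B \<and> f (\<Inter>F) \<in> p" by (rule fin_inter[OF FF(1) False FF(2) Bint fint pf])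
          show ?thesis
          proof
            assume "\<Inter>F = {}"
            then have "bot \<in> p" using I fe by simp
            then show False using pf unfolding lattice_filter_def by blast
          qed
        qed simp
      qed
    then have "\<Inter>?U \<noteq> {}"
      using assms(1)[unfolded compact_space_fip, rule_format, of ?U] by blast
    then obtain x where x: "x \<in> \<Inter>?U" by blast
    have "topspace X \<in> ?U" using Bt ft pf unfolding lattice_filter_def by simp
    then show "\<exists>x. P p x" using x unfolding P_def by blast
  next
    fix x y assume Px: "P p x" and Py: "P p y"
    show "x = y"
    proof (rule ccontr)
      assume xy: "x \<noteq> y"
      have xX: "x \<in> topspace X" and yX: "y \<in> topspace X" using Px Py unfolding P_def by simp_all
      have "\<exists>U V. openin X U \<and> openin X V \<and> x \<in> U \<and> y \<in> V \<and> disjnt U V"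
        using assms(2) xX yX xy unfolding Hausdorff_space_def by blast
      then obtain U V where UV: "openin X U" "openin X V" "x \<in> U" "y \<in> V" "disjnt U V"
        by blast
      have "\<exists>b1\<in>B. \<exists>b2\<in>B. b1 \<union> b2 = topspace X \<and> {} \<subseteq> b1 \<and> y \<notin> b1 \<and> x \<notin> b2"
        by (rule sep2[OF UV(1,2,5) UV(4,3) empty_subsetI])
      then obtain b1 b2 where b: "b1 \<in> B" "b2 \<in> B" "b1 \<union> b2 = topspace X" "y \<notin> b1" "x \<notin> b2"
        by blast
      have "f b1 \<in> p \<or> f b2 \<in> p" by (rule key[OF up b(1,2,3)])
      moreover have "f b1 \<in> p \<Longrightarrow> y \<in> b1" using Py b(1) unfolding P_def by blast
      moreover have "f b2 \<in> p \<Longrightarrow> x \<in> b2" using Px b(2) unfolding P_def by blast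
      ultimately show False using b(4,5) by blast
    qed
  qed
  define g where "g p = (THE x. P p x)" for p
  have gP: "\<And>p. lattice_ultrafilter p \<Longrightarrow> P p (g p)"
    unfolding g_def using ex1 by (rule theI')
  have gu: "\<And>p x. lattice_ultrafilter p \<Longrightarrow> P p x \<Longrightarrow> g p = x"
    unfolding g_def using ex1 by (rule the1_equality)
  have gX: "\<And>p. lattice_ultrafilter p \<Longrightarrow> g p \<in> topspace X"
    using gP unfolding P_def by simp
  have gB: "\<And>p b. lattice_ultrafilter p \<Longrightarrow> b \<in> B \<Longrightarrow> f b \<in> p \<Longrightarrow> g p \<in> b"
    using gP unfolding P_def by simp
  have Bbase: "\<And>C. closedin X C \<Longrightarrow> \<exists>A\<subseteq>B. C = topspace X \<inter> \<Inter>A"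
    using cb unfolding closed_base_sublattice_def by simp
  have cont: "continuous_map (wallman_space T) X g"
    unfolding continuous_map_closedin
  proof (intro conjI allI impI)
    show "g \<in> topspace (wallman_space T) \<rightarrow> topspace X"
      unfolding topW using gX by simp
  next
    fix C assume C: "closedin X C"
    let ?S = "{x \<in> topspace (wallman_space T). g x \<in> C}"
    have "openin (wallman_space T) (topspace (wallman_space T) - ?S)"
    proof (subst openin_subopen, intro ballI)
      fix p assume p: "p \<in> topspace (wallman_space T) - ?S"
      then have up: "lattice_ultrafilter p" and gC: "g p \<notin> C" using topW by auto
      have gpX: "g p \<in> topspace X" using gX[OF up] .
      have cC: "compactin X C" by (rule closedin_compact_space[OF assms(1) C])
      have cS: "compactin X {g p}" using gpX by simp
      have dj: "disjnt C {g p}" using gC by simp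
      obtain U V where UV: "openin X U" "openin X V" "C \<subseteq> U" "{g p} \<subseteq> V" "disjnt U V"
        by (rule Hausdorff_space_compact_separation[OF assms(2) cC cS dj])
      have cV: "closedin X (topspace X - V)" using UV(2) by (rule closedin_diff[OF closedin_topspace])
      have nV: "g p \<notin> topspace X - V" using UV(4) by simp
      obtain b1 where b1: "b1 \<in> B" "topspace X - V \<subseteq> b1" "g p \<notin> b1"
        using base_sep[OF cb cV gpX nV] by blast
      have "f b1 \<notin> p" using gB[OF up b1(1)] b1(3) by blast
      then have pin: "p \<in> {p. lattice_ultrafilter p} - wallman_basic (f b1)"
        using up unfolding wallman_basic_def by simp
      have "{p. lattice_ultrafilter p} - wallman_basic (f b1) \<subseteq> topspace (wallman_space T) - ?S"
      proof
        fix q assume q: "q \<in> {p. lattice_ultrafilter p} - wallman_basic (f b1)"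
        then have uq: "lattice_ultrafilter q" and nq: "f b1 \<notin> q"
          unfolding wallman_basic_def by auto
        have "g q \<notin> C"
        proof
          assume gqC: "g q \<in> C"
          then have gqU: "g q \<in> U" using UV(3) by blast
          have gqX: "g q \<in> topspace X" using gX[OF uq] .
          have cU: "closedin X (topspace X - U)" using UV(1) by (rule closedin_diff[OF closedin_topspace])
          have nU: "g q \<notin> topspace X - U" using gqU by simp
          obtain b2 where b2: "b2 \<in> B" "topspace X - U \<subseteq> b2" "g q \<notin> b2"
            using base_sep[OF cb cU gqX nU] by blast
          have s1: "b1 \<subseteq> topspace X" using Bsub[OF b1(1)] .
          have s2: "b2 \<subseteq> topspace X" using Bsub[OF b2(1)] .
          have "b1 \<union> b2 = topspace X"
          proof
            show "b1 \<union> b2 \<subseteq> topspace X" using s1 s2 by (rule Un_least)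
            show "topspace X \<subseteq> b1 \<union> b2"
            proof
              fix z assume z: "z \<in> topspace X"
              have "z \<notin> U \<or> z \<notin> V" using UV(5) unfolding disjnt_def by blast
              then show "z \<in> b1 \<union> b2" using z b1(2) b2(2) by blast
            qed
          qed
          from key[OF uq b1(1) b2(1) this] nq have "f b2 \<in> q" by blast
          then show False using gB[OF uq b2(1)] b2(3) by blast
        qed
        then show "q \<in> topspace (wallman_space T) - ?S" using uq topW by simp
      qed
      then show "\<exists>T'. openin (wallman_space T) T' \<and> p \<in> T' \<and> T' \<subseteq> topspace (wallman_space T) - ?S"
        using opW pin by blast
    qed
    then show "closedin (wallman_space T) ?S" unfolding closedin_def by blast
  qed
  have surj: "g ` topspace (wallman_space T) = topspace X"
  proof
    show "g ` topspace (wallman_space T) \<subseteq> topspace X"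
      unfolding topW using gX by blast
  next
    show "topspace X \<subseteq> g ` topspace (wallman_space T)"
    proof
      fix x assume xX: "x \<in> topspace X"
      define F where "F = {c. \<exists>b\<in>B. x \<in> b \<and> f b \<le> c}"
      have "lattice_filter F" unfolding lattice_filter_def
      proof (intro conjI ballI allI impI)
        have "topspace X \<in> B \<and> x \<in> topspace X \<and> f (topspace X) \<le> top" using Bt xX by simp
        then show "top \<in> F" unfolding F_def by blast
        show "bot \<notin> F"
        proof
          assume "bot \<in> F"
          then obtain b where b: "b \<in> B" "x \<in> b" "f b \<le> bot" unfolding F_def by blast
          then have "f b = f {}" using fe by (simp add: bot_unique)
          then have "b = {}" using inj_onD[OF inj _ b(1) Be] by blast
          then show False using b(2) by simp
        qed
      next
        fix c d assume "c \<in> F" "d \<in> F"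
        then obtain b1 b2 where b: "b1 \<in> B" "x \<in> b1" "f b1 \<le> c" "b2 \<in> B" "x \<in> b2" "f b2 \<le> d"
          unfolding F_def by blast
        have "b1 \<inter> b2 \<in> B" using Bint b(1,4) by blast
        moreover have "f (b1 \<inter> b2) = inf (f b1) (f b2)" using fint b(1,4) by blast
        moreover have "inf (f b1) (f b2) \<le> inf c d" using b(3,6) by (rule inf_mono)
        moreover have "x \<in> b1 \<inter> b2" using b(2,5) by simp
        ultimately show "inf c d \<in> F" unfolding F_def by auto
      next
        fix c d assume "c \<in> F" "c \<le> d" then show "d \<in> F" unfolding F_def using order_trans by blast
      qed
      then obtain p where up: "lattice_ultrafilter p" and Fp: "F \<subseteq> p" using uf_exists by blast
      obtain A where A: "A \<subseteq> B" "{x} = topspace X \<inter> \<Inter>A"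
        using Bbase[OF closedin_Hausdorff_singleton[OF assms(2) xX]] by blast
      have "g p \<in> topspace X \<inter> \<Inter>A"
      proof
        show "g p \<in> topspace X" using gX[OF up] .
        show "g p \<in> \<Inter>A"
        proof
          fix b assume bA: "b \<in> A"
          have bB: "b \<in> B" using A(1) bA by blast
          have "x \<in> b" using A(2) bA by blast
          then have "f b \<in> F" unfolding F_def using bB by blast
          then have "f b \<in> p" using Fp by blast
          then show "g p \<in> b" using gB[OF up bB] by blast
        qed
      qed
      then have "g p = x" using A(2) by blast
      moreover have "p \<in> topspace (wallman_space T)" using up topW by simp
      ultimately show "x \<in> g ` topspace (wallman_space T)" by (metis imageI)
    qed
  qed
  show ?thesis using cont surj by blast
qed

end
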